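(* Let $(X_1,\dots,X_M)$ have density $f\in\mathrm{MMEam}$ of the form $f(x_1,\dots,x_M)=\sum_{\mathbf i\in\mathscr S}p_{\mathbf i}f_{i_1}(x_1)\cdots f_{i_M}(x_M)$, and let $B$ be a strictly positive random variable independent of $(X_1,\dots,X_M)$ with distribution function $G$ and Laplace transform $\mathcal G(z)=\int_0^\infty e^{-zr}\,dG(r)$. Let $X_j^\dagger=X_j/B$ for $1\le j\le M$. Then for $j\in\{1,\dots,M\}$ and $x\ge0$, $$F_{X_j^\dagger}(x)=1-\sum_{\mathbf i\in\mathscr S}p_{\mathbf i}\,\alpha_{i_j}\,\mathcal G(-T_{i_j}x)\,l_{i_j},$$ where for $k\in\{1,\dots,L\}$, $\mathcal G(-T_kx)=\int_0^\infty e^{-(-T_kx)r}\,dG(r)$ (a matrix-valued integral) and $l_k=(-T_k)^{-1}t_k$.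
   Context: An ME density is a probability density on $[0,\infty)$ of the form $g(x)=\alpha e^{Tx}t$ ($\alpha$ real row vector, $T$ real square matrix, $t$ real column vector); triples are taken with all eigenvalues of $T$ having strictly negative real part, so $T$ is invertible and with $l=(-T)^{-1}t$ the survival function is $\alpha e^{Tx}l$. MMEam: fix $L,M\in\mathbb N_+$ and ME densities $f_1,\dots,f_L$ with triples $(\alpha_j,T_j,t_j)$. Let $\mathscr S=\{1,\dots,L\}^M$, $\mathbf i=(i_1,\dots,i_M)$, and real numbers $p_{\mathbf i}$ (possibly negative) with $\sum p_{\mathbf i}=1$; $f(x)=\sum_{\mathbf i}p_{\mathbf i}f_{i_1}(x_1)\cdots f_{i_M}(x_M)$ on $[0,\infty)^M$ is an MMEam density if $f\ge0$. $F_Y$ denotes the distribution function of $Y$. *)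

theory Defs
  imports "HOL-Probability.Probability" "Jordan_Normal_Form.Char_Poly"
    "Jordan_Normal_Form.Gauss_Jordan_Elimination"
begin

definition mat_exp :: "real mat \<Rightarrow> real mat" where
  "mat_exp A = mat (dim_row A) (dim_col A)
     (\<lambda>(a,b). \<Sum>n. (A ^\<^sub>m n) $$ (a,b) / fact n)"

definition ME_triple :: "real vec \<Rightarrow> real mat \<Rightarrow> real vec \<Rightarrow> bool" where
  "ME_triple \<alpha> T t \<longleftrightarrow> (\<exists>n. \<alpha> \<in> carrier_vec n \<and> T \<in> carrier_mat n n \<and> t \<in> carrier_vec n
     \<and> (\<forall>z::complex. eigenvalue (map_mat complex_of_real T) z \<longrightarrow> Re z < 0))"

definition ME_fun :: "real vec \<Rightarrow> real mat \<Rightarrow> real vec \<Rightarrow> real \<Rightarrow> real" where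
  "ME_fun \<alpha> T t x = \<alpha> \<bullet> (mat_exp (x \<cdot>\<^sub>m T) *\<^sub>v t)"

definition ME_density :: "real vec \<Rightarrow> real mat \<Rightarrow> real vec \<Rightarrow> bool" where
  "ME_density \<alpha> T t \<longleftrightarrow> ME_triple \<alpha> T t \<and> (\<forall>x\<ge>0. ME_fun \<alpha> T t x \<ge> 0)
     \<and> (ME_fun \<alpha> T t has_integral 1) {0..}"

definition ME_l :: "real mat \<Rightarrow> real vec \<Rightarrow> real vec" where
  "ME_l T t = the (mat_inverse (- T)) *\<^sub>v t"

text \<open>Index set S = {1..L}^M, with coordinates indexed by the finite type 'm.\<close>
definition idx_set :: "nat \<Rightarrow> ('m::finite \<Rightarrow> nat) set" where
  "idx_set L = Pi\<^sub>E UNIV (\<lambda>_. {1..L})"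

definition MMEam_fun :: "nat \<Rightarrow> (nat \<Rightarrow> real vec) \<Rightarrow> (nat \<Rightarrow> real mat) \<Rightarrow> (nat \<Rightarrow> real vec)
    \<Rightarrow> (('m::finite \<Rightarrow> nat) \<Rightarrow> real) \<Rightarrow> real^'m \<Rightarrow> real" where
  "MMEam_fun L \<alpha> T t p x = (\<Sum>i\<in>idx_set L. p i * (\<Prod>j\<in>UNIV. ME_fun (\<alpha> (i j)) (T (i j)) (t (i j)) (x $ j)))"

definition orthant :: "(real^'m::finite) set" where
  "orthant = {x. \<forall>j. 0 \<le> x $ j}"

text \<open>Matrix-valued Laplace transform G(Z) = \<integral> e^{-Zr} dG(r) w.r.t. the distribution \<mu> of B,
  defined entrywise.\<close>
definition mat_laplace :: "real measure \<Rightarrow> real mat \<Rightarrow> real mat" where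
  "mat_laplace \<mu> Z = mat (dim_row Z) (dim_col Z)
     (\<lambda>(a,b). \<integral>r. (mat_exp ((- r) \<cdot>\<^sub>m Z)) $$ (a,b) \<partial>\<mu>)"

end

theory Submission
  imports Defs "Jordan_Normal_Form.Schur_Decomposition" "HOL-Real_Asymp.Real_Asymp"
begin


lemma mult_entry:
  fixes A B :: "'a::comm_ring_1 mat"
  assumes "A \<in> carrier_mat n n" "B \<in> carrier_mat n n" "i < n" "j < n"
  shows "(A * B) $$ (i,j) = (\<Sum>c<n. A $$ (i,c) * B $$ (c,j))"
  using assms by (auto simp: scalar_prod_def lessThan_atLeast0 intro!: sum.cong)

lemma pow_entry_bound:
  fixes A :: "real mat"
  assumes A: "A \<in> carrier_mat n n"
  shows "a < n \<Longrightarrow> b < n \<Longrightarrow> \<bar>(A ^\<^sub>m k) $$ (a,b)\<bar> \<le> ((\<Sum>i<n. \<Sum>j<n. \<bar>A $$ (i,j)\<bar>) + 1) ^ k"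
proof (induction k arbitrary: a b)
  case 0 then show ?case using A by auto
next
  case (Suc k)
  define S where "S = (\<Sum>i<n. \<Sum>j<n. \<bar>A $$ (i,j)\<bar>)"
  have S0: "S \<ge> 0" unfolding S_def by (auto intro!: sum_nonneg)
  have "\<bar>(A ^\<^sub>m Suc k) $$ (a,b)\<bar> = \<bar>\<Sum>c<n. (A ^\<^sub>m k) $$ (a,c) * A $$ (c,b)\<bar>"
    using Suc.prems A by (simp only: pow_mat.simps, subst mult_entry[of _ n]) auto
  also have "\<dots> \<le> (\<Sum>c<n. \<bar>(A ^\<^sub>m k) $$ (a,c)\<bar> * \<bar>A $$ (c,b)\<bar>)"
    by (rule order_trans[OF sum_abs]) (simp add: abs_mult)
  also have "\<dots> \<le> (\<Sum>c<n. (S+1)^k * \<bar>A $$ (c,b)\<bar>)"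
    using Suc.IH Suc.prems by (auto intro!: sum_mono mult_right_mono simp: S_def)
  also have "\<dots> = (S+1)^k * (\<Sum>c<n. \<bar>A $$ (c,b)\<bar>)" by (simp add: sum_distrib_left)
  also have "(\<Sum>c<n. \<bar>A $$ (c,b)\<bar>) \<le> S"
  proof -
    have "(\<Sum>c<n. \<bar>A $$ (c,b)\<bar>) = (\<Sum>c<n. \<Sum>j\<in>{b}. \<bar>A $$ (c,j)\<bar>)" by simp
    also have "\<dots> \<le> S" unfolding S_def using Suc.prems
      by (intro sum_mono sum_mono2) auto
    finally show ?thesis .
  qed
  hence "(S+1)^k * (\<Sum>c<n. \<bar>A $$ (c,b)\<bar>) \<le> (S+1)^k * (S+1)"
    using S0 by (intro mult_left_mono) auto
  finally show ?case by (simp add: S_def mult.commute)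
qed

lemma smult_pow_mat:
  fixes A :: "'a::comm_ring_1 mat"
  assumes "A \<in> carrier_mat n n"
  shows "(y \<cdot>\<^sub>m A) ^\<^sub>m k = (y ^ k) \<cdot>\<^sub>m (A ^\<^sub>m k)"
  using assms
proof (induction k)
  case 0 then show ?case by auto
next
  case (Suc k)
  have c: "A ^\<^sub>m k \<in> carrier_mat n n" using assms by simp
  have "(y \<cdot>\<^sub>m A) ^\<^sub>m Suc k = (y ^ k \<cdot>\<^sub>m A ^\<^sub>m k) * (y \<cdot>\<^sub>m A)" using Suc by simp
  also have "\<dots> = y ^ k \<cdot>\<^sub>m (A ^\<^sub>m k * (y \<cdot>\<^sub>m A))"
    using c assms by (intro mult_smult_assoc_mat) auto
  also have "A ^\<^sub>m k * (y \<cdot>\<^sub>m A) = y \<cdot>\<^sub>m (A ^\<^sub>m k * A)"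
    using c assms by (intro mult_smult_distrib) auto
  finally show ?case by (auto intro!: eq_matI)
qed

definition coef :: "real mat \<Rightarrow> nat \<Rightarrow> nat \<Rightarrow> nat \<Rightarrow> real" where
  "coef A a b k = (A ^\<^sub>m k) $$ (a,b) / fact k"

lemma coef_summable:
  assumes A: "A \<in> carrier_mat n n" and ab: "a < n" "b < n"
  shows "summable (\<lambda>k. coef A a b k * y ^ k)"
proof -
  define S where "S = (\<Sum>i<n. \<Sum>j<n. \<bar>A $$ (i,j)\<bar>) + 1"
  have "summable (\<lambda>k. inverse (fact k) * (S * \<bar>y\<bar>) ^ k)" by (rule summable_exp)
  then show ?thesis
  proof (rule summable_comparison_test'[where N=0])
    fix k :: nat
    have "norm (coef A a b k * y ^ k) = \<bar>(A ^\<^sub>m k) $$ (a,b)\<bar> / fact k * \<bar>y\<bar> ^ k"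
      by (simp add: coef_def abs_mult power_abs)
    also have "\<dots> \<le> S ^ k / fact k * \<bar>y\<bar> ^ k"
      using pow_entry_bound[OF A ab, of k] unfolding S_def
      by (intro mult_right_mono divide_right_mono) auto
    also have "\<dots> = inverse (fact k) * (S * \<bar>y\<bar>) ^ k"
      by (simp add: power_mult_distrib field_simps)
    finally show "norm (coef A a b k * y ^ k) \<le> inverse (fact k) * (S * \<bar>y\<bar>) ^ k" .
  qed
qed

lemma mat_exp_carrier: "A \<in> carrier_mat n n \<Longrightarrow> mat_exp (y \<cdot>\<^sub>m A) \<in> carrier_mat n n"
  unfolding mat_exp_def by auto

lemma mat_exp_entry:
  assumes A: "A \<in> carrier_mat n n" and ab: "a < n" "b < n"
  shows "mat_exp (y \<cdot>\<^sub>m A) $$ (a,b) = (\<Sum>k. coef A a b k * y ^ k)"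
proof -
  have "\<And>k. ((y \<cdot>\<^sub>m A) ^\<^sub>m k) $$ (a,b) / fact k = coef A a b k * y ^ k"
    using A ab by (simp add: smult_pow_mat[OF A] coef_def)
  then show ?thesis using A ab unfolding mat_exp_def by simp
qed

lemma pow_mat_comm:
  fixes A :: "'a::comm_ring_1 mat"
  assumes A: "A \<in> carrier_mat n n"
  shows "A * A ^\<^sub>m k = A ^\<^sub>m k * A"
proof (induction k)
  case 0 then show ?case using A by simp
next
  case (Suc k)
  have c: "A ^\<^sub>m k \<in> carrier_mat n n" using A by simp
  have "A * A ^\<^sub>m Suc k = (A * A ^\<^sub>m k) * A" using A c by (simp add: assoc_mult_mat[of _ n n _ n _ n])
  also have "\<dots> = A ^\<^sub>m Suc k * A" using Suc by simp
  finally show ?case .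
qed

lemma mat_exp_deriv:
  assumes A: "A \<in> carrier_mat n n" and ab: "a < n" "b < n"
  shows "((\<lambda>y. mat_exp (y \<cdot>\<^sub>m A) $$ (a,b)) has_real_derivative
           (\<Sum>c<n. A $$ (a,c) * mat_exp (y \<cdot>\<^sub>m A) $$ (c,b))) (at y)"
proof -
  have eq: "(\<lambda>y. mat_exp (y \<cdot>\<^sub>m A) $$ (a,b)) = (\<lambda>y. \<Sum>k. coef A a b k * y ^ k)"
    using mat_exp_entry[OF A ab] by auto
  have d: "((\<lambda>y. \<Sum>k. coef A a b k * y ^ k) has_real_derivative (\<Sum>k. diffs (coef A a b) k * y ^ k)) (at y)"
    by (rule termdiffs_strong_converges_everywhere) (rule coef_summable[OF A ab])
  have "\<And>k. diffs (coef A a b) k * y ^ k = (\<Sum>c<n. A $$ (a,c) * (coef A c b k * y ^ k))"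
  proof -
    fix k
    have "(A ^\<^sub>m Suc k) $$ (a,b) = (A * A ^\<^sub>m k) $$ (a,b)"
      using pow_mat_comm[OF A, of k] by simp
    also have "\<dots> = (\<Sum>c<n. A $$ (a,c) * (A ^\<^sub>m k) $$ (c,b))"
      using A ab by (intro mult_entry) auto
    finally have "(A ^\<^sub>m Suc k) $$ (a,b) = (\<Sum>c<n. A $$ (a,c) * (A ^\<^sub>m k) $$ (c,b))" .
    moreover have "diffs (coef A a b) k = (A ^\<^sub>m Suc k) $$ (a,b) / fact k"
      unfolding diffs_def coef_def by (simp add: fact_Suc del: pow_mat.simps)
    ultimately have "diffs (coef A a b) k * y ^ k = (\<Sum>c<n. A $$ (a,c) * (A ^\<^sub>m k) $$ (c,b)) / fact k * y ^ k"
      by simp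
    also have "\<dots> = (\<Sum>c<n. A $$ (a,c) * (coef A c b k * y ^ k))"
      unfolding coef_def sum_divide_distrib sum_distrib_right by (simp add: algebra_simps)
    finally show "diffs (coef A a b) k * y ^ k = (\<Sum>c<n. A $$ (a,c) * (coef A c b k * y ^ k))" .
  qed
  hence "(\<Sum>k. diffs (coef A a b) k * y ^ k) = (\<Sum>k. \<Sum>c<n. A $$ (a,c) * (coef A c b k * y ^ k))"
    by simp
  also have "\<dots> = (\<Sum>c<n. \<Sum>k. A $$ (a,c) * (coef A c b k * y ^ k))"
    using coef_summable[OF A _ ab(2)] by (intro suminf_sum) (auto intro: summable_mult)
  also have "\<dots> = (\<Sum>c<n. A $$ (a,c) * mat_exp (y \<cdot>\<^sub>m A) $$ (c,b))"
    using coef_summable[OF A _ ab(2)] mat_exp_entry[OF A _ ab(2)]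
    by (intro sum.cong refl) (simp add: suminf_mult)
  finally show ?thesis using d eq by simp
qed



lemma scalar_decay:
  fixes v h :: "real \<Rightarrow> complex" and lam :: complex
  assumes lam: "Re lam < 0" and h: "(h \<longlongrightarrow> 0) at_top"
    and dv: "\<And>y. (v has_vector_derivative (lam * v y + h y)) (at y)"
  shows "(v \<longlongrightarrow> 0) at_top"
proof -
  define a where "a = - Re lam"
  have a: "a > 0" using lam a_def by simp
  define \<phi> where "\<phi> y = Re (v y)^2 + Im (v y)^2" for y
  have dphi: "(\<phi> has_real_derivative
      (2 * Re (v y) * Re (lam * v y + h y) + 2 * Im (v y) * Im (lam * v y + h y))) (at y)" for y
    unfolding \<phi>_def
    by (rule derivative_eq_intros has_field_derivative_Re[OF dv] has_field_derivative_Im[OF dv] refl)+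
      (simp add: algebra_simps)
  have dineq: "2 * Re (v y) * Re (lam * v y + h y) + 2 * Im (v y) * Im (lam * v y + h y)
      \<le> - a * \<phi> y + (Re (h y)^2 + Im (h y)^2) / a" for y
  proof -
    have e: "2 * Re (v y) * Re (lam * v y + h y) + 2 * Im (v y) * Im (lam * v y + h y)
       = -2 * a * \<phi> y + 2 * (Re (v y) * Re (h y) + Im (v y) * Im (h y))"
      unfolding \<phi>_def a_def by (simp add: algebra_simps power2_eq_square)
    have i1: "2 * (Re (v y) * Re (h y)) \<le> a * Re (v y)^2 + Re (h y)^2 / a"
    proof -
      have "0 \<le> (a * Re (v y) - Re (h y))^2 / a" using a by simp
      then show ?thesis using a by (simp add: power2_eq_square field_simps)
    qed
    have i2: "2 * (Im (v y) * Im (h y)) \<le> a * Im (v y)^2 + Im (h y)^2 / a"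
    proof -
      have "0 \<le> (a * Im (v y) - Im (h y))^2 / a" using a by simp
      then show ?thesis using a by (simp add: power2_eq_square field_simps)
    qed
    have "(Re (h y)^2 + Im (h y)^2) / a = Re (h y)^2 / a + Im (h y)^2 / a" by (simp add: add_divide_distrib)
    then show ?thesis unfolding e using i1 i2 unfolding \<phi>_def by (simp add: algebra_simps)
  qed
  show ?thesis
  proof (rule tendstoI)
    fix \<epsilon> :: real assume \<epsilon>: "\<epsilon> > 0"
    have "\<forall>\<^sub>F y in at_top. norm (h y) < a * \<epsilon> / 2"
    proof -
      have "a * \<epsilon> / 2 > 0" using a \<epsilon> by simp
      from h[unfolded tendsto_iff, rule_format, OF this] show ?thesis by (simp add: dist_norm)
    qed
    then obtain Y where Y: "\<And>y. y \<ge> Y \<Longrightarrow> norm (h y) < a * \<epsilon> / 2"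
      by (auto simp: eventually_at_top_linorder)
    define \<psi> where "\<psi> y = exp (a * y) * (\<phi> y - \<epsilon>^2/4)" for y
    have hb: "Re (h y)^2 + Im (h y)^2 \<le> (a * \<epsilon> / 2)^2" if "y \<ge> Y" for y
    proof -
      have "Re (h y)^2 + Im (h y)^2 = norm (h y)^2" by (simp add: cmod_def)
      also have "\<dots> \<le> (a * \<epsilon> / 2)^2" using Y[OF that] by (intro power_mono) auto
      finally show ?thesis .
    qed
    have mono: "\<psi> y \<le> \<psi> Y" if "y \<ge> Y" for y
    proof (rule DERIV_nonpos_imp_nonincreasing[OF that])
      fix x assume x: "Y \<le> x" "x \<le> y"
      have d: "(\<psi> has_real_derivative
          (a * exp (a * x) * (\<phi> x - \<epsilon>^2/4) + exp (a * x) *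
            (2 * Re (v x) * Re (lam * v x + h x) + 2 * Im (v x) * Im (lam * v x + h x)))) (at x)"
        unfolding \<psi>_def by (rule derivative_eq_intros dphi refl)+ (simp add: algebra_simps)
      have "(2 * Re (v x) * Re (lam * v x + h x) + 2 * Im (v x) * Im (lam * v x + h x))
          \<le> - a * \<phi> x + (a * \<epsilon> / 2)^2 / a"
        using dineq[of x] hb[of x] x a by (smt (verit) divide_right_mono)
      hence "a * (\<phi> x - \<epsilon>^2/4) + (2 * Re (v x) * Re (lam * v x + h x) + 2 * Im (v x) * Im (lam * v x + h x)) \<le> 0"
        using a by (simp add: power2_eq_square field_simps)
      hence "exp (a * x) * (a * (\<phi> x - \<epsilon>^2/4) + (2 * Re (v x) * Re (lam * v x + h x) + 2 * Im (v x) * Im (lam * v x + h x))) \<le> 0"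
        by (simp add: mult_nonneg_nonpos)
      then show "\<exists>D. (\<psi> has_real_derivative D) (at x) \<and> D \<le> 0"
        using d by (intro exI[of _ "_"] conjI) (auto simp: algebra_simps)
    qed
    have lim: "((\<lambda>y. exp (- (a * (y - Y))) * \<bar>\<phi> Y\<bar>) \<longlongrightarrow> 0) at_top"
      using a by real_asymp
    hence "\<forall>\<^sub>F y in at_top. exp (- (a * (y - Y))) * \<bar>\<phi> Y\<bar> < \<epsilon>^2/2"
    proof -
      have "\<epsilon>^2/2 > 0" using \<epsilon> by simp
      from lim[unfolded tendsto_iff, rule_format, OF this] show ?thesis by (simp add: dist_norm)
    qed
    moreover have "\<forall>\<^sub>F y in at_top. y \<ge> Y" by (rule eventually_ge_at_top)
    ultimately show "\<forall>\<^sub>F y in at_top. dist (v y) 0 < \<epsilon>"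
    proof eventually_elim
      case (elim y)
      have "exp (a * y) * (\<phi> y - \<epsilon>^2/4) \<le> exp (a * Y) * (\<phi> Y - \<epsilon>^2/4)"
        using mono[OF elim(2)] unfolding \<psi>_def .
      hence "\<phi> y - \<epsilon>^2/4 \<le> exp (- (a * (y - Y))) * (\<phi> Y - \<epsilon>^2/4)"
        by (simp add: algebra_simps exp_diff exp_minus field_simps)
      also have "\<dots> \<le> exp (- (a * (y - Y))) * \<bar>\<phi> Y\<bar>"
        using \<epsilon> by (intro mult_left_mono) (auto simp: abs_if intro: order_trans[OF _ zero_le_power2])
      moreover have "\<epsilon>^2 > 0" using \<epsilon> by simp
      ultimately have "\<phi> y < \<epsilon>^2" using elim(1) by linarith
      hence "norm (v y)^2 < \<epsilon>^2" unfolding \<phi>_def by (simp add: cmod_def)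
      hence "norm (v y) < \<epsilon>" using \<epsilon> by (smt (verit) power_mono norm_ge_zero)
      then show ?case by (simp add: dist_norm)
    qed
  qed
qed

lemma sum_swap_mult:
  fixes a :: "'i \<Rightarrow> 'a::comm_semiring_1"
  shows "(\<Sum>j\<in>J. a j * (\<Sum>l\<in>L. b j l * c l)) = (\<Sum>l\<in>L. (\<Sum>j\<in>J. a j * b j l) * c l)"
  by (simp add: sum_distrib_left sum_distrib_right mult.assoc) (rule sum.swap)

lemma stable_decay:
  fixes A :: "real mat" and w :: "real \<Rightarrow> nat \<Rightarrow> real"
  assumes A: "A \<in> carrier_mat n n"
    and ev: "\<forall>z::complex. eigenvalue (map_mat complex_of_real A) z \<longrightarrow> Re z < 0"
    and dw: "\<And>y i. i < n \<Longrightarrow> ((\<lambda>y. w y i) has_real_derivative (\<Sum>j<n. A $$ (i,j) * w y j)) (at y)"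
    and i: "i < n"
  shows "((\<lambda>y. w y i) \<longlongrightarrow> 0) at_top"
proof -
  define AC where "AC = map_mat complex_of_real A"
  have AC: "AC \<in> carrier_mat n n" using A unfolding AC_def by simp
  obtain es where cp: "char_poly AC = (\<Prod>a\<leftarrow>es. [:- a, 1:])"
    using char_poly_factorized[OF AC] by blast
  obtain U P Q where sch: "schur_decomposition AC es = (U,P,Q)" by (cases "schur_decomposition AC es") auto
  from schur_decomposition[OF AC cp sch]
  have sw: "similar_mat_wit AC U P Q" and ut: "upper_triangular U" and dg: "diag_mat U = es" by auto
  from sw AC have U: "U \<in> carrier_mat n n" and P: "P \<in> carrier_mat n n" and Q: "Q \<in> carrier_mat n n"
    and PQ: "P * Q = 1\<^sub>m n" and QP: "Q * P = 1\<^sub>m n" and APUQ: "AC = P * U * Q"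
    unfolding similar_mat_wit_def Let_def by auto
  have diagev: "Re (U $$ (k,k)) < 0" if k: "k < n" for k
  proof -
    have "U $$ (k,k) \<in> set es" using dg[symmetric] U k unfolding diag_mat_def by auto
    hence "poly (char_poly AC) (U $$ (k,k)) = 0"
      unfolding cp by (auto simp: poly_prod_list prod_list_zero_iff)
    hence "eigenvalue AC (U $$ (k,k))" using eigenvalue_root_char_poly[OF AC] by simp
    thus ?thesis using ev unfolding AC_def by blast
  qed
  have QA: "Q * AC = U * Q"
  proof -
    have "Q * AC = Q * (P * U * Q)" using APUQ by simp
    also have "\<dots> = (Q * P) * U * Q" using P U Q by (simp add: assoc_mult_mat[of _ n n _ n _ n])
    also have "\<dots> = U * Q" using QP U Q by simp
    finally show ?thesis .
  qed
  define v where "v y k = (\<Sum>j<n. Q $$ (k,j) * complex_of_real (w y j))" for y k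
  have dv: "((\<lambda>y. v y k) has_vector_derivative (U $$ (k,k) * v y k + (\<Sum>m\<in>{Suc k..<n}. U $$ (k,m) * v y m))) (at y)"
    if k: "k < n" for k y
  proof -
    have d1: "((\<lambda>y. v y k) has_vector_derivative
        (\<Sum>j<n. Q $$ (k,j) * complex_of_real (\<Sum>l<n. A $$ (j,l) * w y l))) (at y)"
      unfolding v_def by (intro has_vector_derivative_sum has_vector_derivative_mult_right
          has_vector_derivative_of_real dw) auto
    have "(\<Sum>j<n. Q $$ (k,j) * complex_of_real (\<Sum>l<n. A $$ (j,l) * w y l))
        = (\<Sum>l<n. (\<Sum>j<n. Q $$ (k,j) * AC $$ (j,l)) * complex_of_real (w y l))"
      unfolding AC_def using A k by (simp add: sum_swap_mult)
    also have "\<dots> = (\<Sum>l<n. (Q * AC) $$ (k,l) * complex_of_real (w y l))"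
      using mult_entry[OF Q AC k] by (intro sum.cong refl) auto
    also have "\<dots> = (\<Sum>l<n. (\<Sum>m<n. U $$ (k,m) * Q $$ (m,l)) * complex_of_real (w y l))"
      unfolding QA using mult_entry[OF U Q k] by (intro sum.cong refl) auto
    also have "\<dots> = (\<Sum>m<n. U $$ (k,m) * v y m)"
      unfolding v_def by (simp add: sum_swap_mult)
    also have "\<dots> = (\<Sum>m\<in>{k..<n}. U $$ (k,m) * v y m)"
    proof -
      have "(\<Sum>m<n. U $$ (k,m) * v y m) = (\<Sum>m\<in>{..<k} \<union> {k..<n}. U $$ (k,m) * v y m)"
        using k by (intro sum.cong) auto
      also have "\<dots> = (\<Sum>m\<in>{..<k}. U $$ (k,m) * v y m) + (\<Sum>m\<in>{k..<n}. U $$ (k,m) * v y m)"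
        by (intro sum.union_disjoint) auto
      also have "(\<Sum>m\<in>{..<k}. U $$ (k,m) * v y m) = 0"
        using ut U k unfolding upper_triangular_def by (intro sum.neutral) auto
      finally show ?thesis by simp
    qed
    also have "\<dots> = U $$ (k,k) * v y k + (\<Sum>m\<in>{Suc k..<n}. U $$ (k,m) * v y m)"
      using k by (subst sum.atLeast_Suc_lessThan) auto
    finally show ?thesis using d1 by simp
  qed
  have vlim: "((\<lambda>y. v y k) \<longlongrightarrow> 0) at_top" if "k < n" for k
    using that
  proof (induction "n - k" arbitrary: k rule: less_induct)
    case less
    have h: "((\<lambda>y. \<Sum>m\<in>{Suc k..<n}. U $$ (k,m) * v y m) \<longlongrightarrow> 0) at_top"
    proof -
      have "((\<lambda>y. \<Sum>m\<in>{Suc k..<n}. U $$ (k,m) * v y m) \<longlongrightarrow> (\<Sum>m\<in>{Suc k..<n}. U $$ (k,m) * 0)) at_top"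
        using less by (intro tendsto_intros) auto
      then show ?thesis by simp
    qed
    show ?case by (rule scalar_decay[OF diagev[OF less.prems] h dv[OF less.prems]])
  qed
  have wv: "complex_of_real (w y i) = (\<Sum>j<n. P $$ (i,j) * v y j)" for y
  proof -
    have "(\<Sum>j<n. P $$ (i,j) * v y j) = (\<Sum>l<n. (\<Sum>j<n. P $$ (i,j) * Q $$ (j,l)) * complex_of_real (w y l))"
      unfolding v_def by (simp add: sum_swap_mult)
    also have "\<dots> = (\<Sum>l<n. (P * Q) $$ (i,l) * complex_of_real (w y l))"
      using mult_entry[OF P Q i] by (intro sum.cong refl) auto
    also have "\<dots> = (\<Sum>l<n. (if i = l then 1 else 0) * complex_of_real (w y l))"
      unfolding PQ using i by (intro sum.cong refl) auto
    also have "\<dots> = (\<Sum>l<n. if l = i then complex_of_real (w y l) else 0)"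
      by (intro sum.cong) auto
    also have "\<dots> = complex_of_real (w y i)" using i by (simp add: sum.delta)
    finally show ?thesis by simp
  qed
  have "((\<lambda>y. \<Sum>j<n. P $$ (i,j) * v y j) \<longlongrightarrow> (\<Sum>j<n. P $$ (i,j) * 0)) at_top"
    using vlim by (intro tendsto_intros) auto
  hence "((\<lambda>y. complex_of_real (w y i)) \<longlongrightarrow> 0) at_top" unfolding wv by simp
  hence "((\<lambda>y. Re (complex_of_real (w y i))) \<longlongrightarrow> Re 0) at_top" by (rule tendsto_Re)
  thus ?thesis by simp
qed



lemma mat_exp_deriv2:
  assumes A: "A \<in> carrier_mat n n" and ab: "a < n" "b < n"
  shows "((\<lambda>y. mat_exp (y \<cdot>\<^sub>m A) $$ (a,b)) has_real_derivative
           (\<Sum>c<n. mat_exp (y \<cdot>\<^sub>m A) $$ (a,c) * A $$ (c,b))) (at y)"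
proof -
  have eq: "(\<lambda>y. mat_exp (y \<cdot>\<^sub>m A) $$ (a,b)) = (\<lambda>y. \<Sum>k. coef A a b k * y ^ k)"
    using mat_exp_entry[OF A ab] by auto
  have d: "((\<lambda>y. \<Sum>k. coef A a b k * y ^ k) has_real_derivative (\<Sum>k. diffs (coef A a b) k * y ^ k)) (at y)"
    by (rule termdiffs_strong_converges_everywhere) (rule coef_summable[OF A ab])
  have "\<And>k. diffs (coef A a b) k * y ^ k = (\<Sum>c<n. (coef A a c k * y ^ k) * A $$ (c,b))"
  proof -
    fix k
    have "(A ^\<^sub>m Suc k) $$ (a,b) = (A ^\<^sub>m k * A) $$ (a,b)" by simp
    also have "\<dots> = (\<Sum>c<n. (A ^\<^sub>m k) $$ (a,c) * A $$ (c,b))"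
      using A ab by (intro mult_entry) auto
    finally have "(A ^\<^sub>m Suc k) $$ (a,b) = (\<Sum>c<n. (A ^\<^sub>m k) $$ (a,c) * A $$ (c,b))" .
    moreover have "diffs (coef A a b) k = (A ^\<^sub>m Suc k) $$ (a,b) / fact k"
      unfolding diffs_def coef_def by (simp add: fact_Suc del: pow_mat.simps)
    ultimately have "diffs (coef A a b) k * y ^ k = (\<Sum>c<n. (A ^\<^sub>m k) $$ (a,c) * A $$ (c,b)) / fact k * y ^ k"
      by simp
    also have "\<dots> = (\<Sum>c<n. (coef A a c k * y ^ k) * A $$ (c,b))"
      unfolding coef_def sum_divide_distrib sum_distrib_right by (simp add: algebra_simps)
    finally show "diffs (coef A a b) k * y ^ k = (\<Sum>c<n. (coef A a c k * y ^ k) * A $$ (c,b))" .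
  qed
  hence "(\<Sum>k. diffs (coef A a b) k * y ^ k) = (\<Sum>k. \<Sum>c<n. (coef A a c k * y ^ k) * A $$ (c,b))"
    by simp
  also have "\<dots> = (\<Sum>c<n. \<Sum>k. (coef A a c k * y ^ k) * A $$ (c,b))"
    using coef_summable[OF A ab(1)] by (intro suminf_sum) (auto intro: summable_mult2)
  also have "\<dots> = (\<Sum>c<n. mat_exp (y \<cdot>\<^sub>m A) $$ (a,c) * A $$ (c,b))"
    using coef_summable[OF A ab(1)] mat_exp_entry[OF A ab(1)]
    by (intro sum.cong refl) (simp add: suminf_mult2)
  finally show ?thesis using d eq by simp
qed

lemma mat_exp_entry_lim:
  assumes A: "A \<in> carrier_mat n n"
    and ev: "\<forall>z::complex. eigenvalue (map_mat complex_of_real A) z \<longrightarrow> Re z < 0"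
    and ab: "a < n" "b < n"
  shows "((\<lambda>y. mat_exp (y \<cdot>\<^sub>m A) $$ (a,b)) \<longlongrightarrow> 0) at_top"
  using stable_decay[OF A ev _ ab(1), of "\<lambda>y i. mat_exp (y \<cdot>\<^sub>m A) $$ (i,b)"]
    mat_exp_deriv[OF A _ ab(2)] by blast

lemma ME_inv:
  assumes T: "T \<in> carrier_mat n n"
    and ev: "\<forall>z::complex. eigenvalue (map_mat complex_of_real T) z \<longrightarrow> Re z < 0"
  shows "\<exists>Bi. mat_inverse (- T) = Some Bi \<and> (- T) * Bi = 1\<^sub>m n \<and> Bi * (- T) = 1\<^sub>m n \<and> Bi \<in> carrier_mat n n"
proof -
  have mT: "- T \<in> carrier_mat n n" using T by simp
  have "det (- T) \<noteq> 0"
  proof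
    assume "det (- T) = 0"
    then obtain v where v: "v \<in> carrier_vec n" "v \<noteq> 0\<^sub>v n" "(- T) *\<^sub>v v = 0\<^sub>v n"
      using det_0_iff_vec_prod_zero_field[OF mT] by blast
    have "T *\<^sub>v v = 0\<^sub>v n"
    proof (rule eq_vecI)
      fix i assume "i < dim_vec (0\<^sub>v n :: real vec)"
      then show "(T *\<^sub>v v) $ i = 0\<^sub>v n $ i"
        using arg_cong[OF v(3), of "\<lambda>w. w $ i"] T v(1) by (auto simp: scalar_prod_def sum_negf)
    qed (use T in auto)
    hence "eigenvector T v 0" using v T unfolding eigenvector_def by auto
    hence "eigenvalue T 0" unfolding eigenvalue_def by blast
    from of_real_hom.eigenvalue_hom[OF T this]
    have "eigenvalue (map_mat complex_of_real T) 0" by simp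
    with ev show False by auto
  qed
  hence "- T \<in> Units (ring_mat TYPE(real) n ())" by (rule det_non_zero_imp_unit[OF mT])
  then obtain Bi where "mat_inverse (- T) = Some Bi"
    using mat_inverse(1)[OF mT, of "()"] by (cases "mat_inverse (- T)") auto
  with mat_inverse(2)[OF mT this] show ?thesis by auto
qed

lemma dot_mv:
  fixes M :: "'a::comm_ring_1 mat"
  assumes "M \<in> carrier_mat n n" "u \<in> carrier_vec n" "v \<in> carrier_vec n"
  shows "u \<bullet> (M *\<^sub>v v) = (\<Sum>a<n. u $ a * (\<Sum>b<n. M $$ (a,b) * v $ b))"
  using assms by (auto simp: scalar_prod_def lessThan_atLeast0 intro!: sum.cong)

lemma mv_entry:
  fixes M :: "'a::comm_ring_1 mat"
  assumes "M \<in> carrier_mat n n" "v \<in> carrier_vec n" "i < n"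
  shows "(M *\<^sub>v v) $ i = (\<Sum>b<n. M $$ (i,b) * v $ b)"
  using assms by (auto simp: scalar_prod_def lessThan_atLeast0 intro!: sum.cong)

lemma ME_survival:
  assumes ME: "ME_density \<alpha> T t"
  defines "g \<equiv> \<lambda>y. \<alpha> \<bullet> (mat_exp (y \<cdot>\<^sub>m T) *\<^sub>v ME_l T t)"
  shows "(g \<longlongrightarrow> 0) at_top" "continuous_on UNIV g"
    and "\<And>z. z \<ge> 0 \<Longrightarrow> (ME_fun \<alpha> T t has_integral (1 - g z)) {0..z}"
proof -
  obtain n where \<alpha>: "\<alpha> \<in> carrier_vec n" and T: "T \<in> carrier_mat n n" and t: "t \<in> carrier_vec n"
    and ev: "\<forall>z::complex. eigenvalue (map_mat complex_of_real T) z \<longrightarrow> Re z < 0"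
    using ME unfolding ME_density_def ME_triple_def by blast
  have f1: "(ME_fun \<alpha> T t has_integral 1) {0..}" and fnn: "\<And>x. x \<ge> 0 \<Longrightarrow> ME_fun \<alpha> T t x \<ge> 0"
    using ME unfolding ME_density_def by auto
  obtain Bi where Bi: "mat_inverse (- T) = Some Bi" "(- T) * Bi = 1\<^sub>m n" "Bi \<in> carrier_mat n n"
    using ME_inv[OF T ev] by blast
  define l where "l = ME_l T t"
  have l_def': "l = Bi *\<^sub>v t" unfolding l_def ME_l_def Bi by simp
  have l: "l \<in> carrier_vec n" using Bi t l_def' by simp
  have Tl: "T *\<^sub>v l = - t"
  proof -
    have "(- T) *\<^sub>v l = t" unfolding l_def' using Bi T t
      by (metis assoc_mult_mat_vec one_mult_mat_vec uminus_carrier_iff_mat)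
    hence "- ((- T) *\<^sub>v l) = - t" by simp
    moreover have "- ((- T) *\<^sub>v l) = T *\<^sub>v l"
      using T l by (intro eq_vecI) (auto simp: scalar_prod_def sum_negf)
    ultimately show ?thesis by simp
  qed
  have Tl': "(\<Sum>b<n. T $$ (c,b) * l $ b) = - t $ c" if "c < n" for c
    using arg_cong[OF Tl, of "\<lambda>w. w $ c"] mv_entry[OF T l that] that t by simp
  define E where "E y a b = mat_exp (y \<cdot>\<^sub>m T) $$ (a,b)" for y a b
  have g_eq: "g y = (\<Sum>a<n. \<alpha> $ a * (\<Sum>b<n. E y a b * l $ b))" for y
    unfolding g_def l_def[symmetric] E_def using dot_mv[OF mat_exp_carrier[OF T] \<alpha> l] .
  have f_eq: "ME_fun \<alpha> T t y = (\<Sum>a<n. \<alpha> $ a * (\<Sum>b<n. E y a b * t $ b))" for y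
    unfolding ME_fun_def E_def using dot_mv[OF mat_exp_carrier[OF T] \<alpha> t] .
  have dE: "((\<lambda>y. E y a b) has_real_derivative (\<Sum>c<n. E y a c * T $$ (c,b))) (at y)"
    if "a < n" "b < n" for a b y
    unfolding E_def by (rule mat_exp_deriv2[OF T that])
  have dg: "(g has_real_derivative (- ME_fun \<alpha> T t y)) (at y)" for y
  proof -
    have "((\<lambda>y. \<Sum>a<n. \<alpha> $ a * (\<Sum>b<n. E y a b * l $ b)) has_real_derivative
        (\<Sum>a<n. \<alpha> $ a * (\<Sum>b<n. (\<Sum>c<n. E y a c * T $$ (c,b)) * l $ b))) (at y)"
      by (intro DERIV_sum DERIV_cmult DERIV_cmult_right dE) auto
    moreover have "(\<Sum>a<n. \<alpha> $ a * (\<Sum>b<n. (\<Sum>c<n. E y a c * T $$ (c,b)) * l $ b))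
        = - ME_fun \<alpha> T t y"
    proof -
      have "(\<Sum>b<n. (\<Sum>c<n. E y a c * T $$ (c,b)) * l $ b) = (\<Sum>c<n. E y a c * (\<Sum>b<n. T $$ (c,b) * l $ b))" for a
        by (simp add: sum_swap_mult)
      also have "\<dots> a = (\<Sum>c<n. E y a c * (- t $ c))" for a by (intro sum.cong refl) (simp add: Tl')
      finally show ?thesis unfolding f_eq by (simp add: sum_negf)
    qed
    ultimately show ?thesis unfolding g_eq[abs_def] by simp
  qed
  show glim: "(g \<longlongrightarrow> 0) at_top"
  proof -
    have "((\<lambda>y. \<Sum>a<n. \<alpha> $ a * (\<Sum>b<n. E y a b * l $ b)) \<longlongrightarrow> (\<Sum>a<n. \<alpha> $ a * (\<Sum>b<n. 0 * l $ b))) at_top"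
      unfolding E_def by (intro tendsto_intros mat_exp_entry_lim[OF T ev]) auto
    thus ?thesis unfolding g_eq[abs_def] by simp
  qed
  show "continuous_on UNIV g"
    using dg by (meson DERIV_continuous continuous_at_imp_continuous_on)
  have int: "(ME_fun \<alpha> T t has_integral (g 0 - g z)) {0..z}" if "z \<ge> 0" for z
  proof -
    have "(ME_fun \<alpha> T t has_integral ((- g z) - (- g 0))) {0..z}"
    proof (rule fundamental_theorem_of_calculus[OF that])
      fix x assume "x \<in> {0..z}"
      have "((\<lambda>y. - g y) has_real_derivative (- (- ME_fun \<alpha> T t x))) (at x)"
        by (intro DERIV_minus dg)
      then show "((\<lambda>y. - g y) has_vector_derivative ME_fun \<alpha> T t x) (at x within {0..z})"
        by (simp add: has_real_derivative_iff_has_vector_derivative[symmetric] has_field_derivative_at_within)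
    qed
    thus ?thesis by simp
  qed
  have g0: "g 0 = 1"
  proof -
    define fk where "fk k x = (if x \<in> {0..real k} then ME_fun \<alpha> T t x else 0)" for k :: nat and x
    have fk_int: "(fk k has_integral (g 0 - g (real k))) {0..}" for k
      unfolding fk_def by (subst has_integral_restrict) (auto intro: int)
    have dc: "(\<lambda>k. integral {0..} (fk k)) \<longlonglongrightarrow> integral {0..} (ME_fun \<alpha> T t)"
    proof (rule dominated_convergence(2))
      show "fk k integrable_on {0..}" for k using fk_int by blast
      show "ME_fun \<alpha> T t integrable_on {0..}" using f1 by blast
      show "norm (fk k x) \<le> ME_fun \<alpha> T t x" if "x \<in> {0..}" for k x
        using fnn that unfolding fk_def by auto
      show "(\<lambda>k. fk k x) \<longlonglongrightarrow> ME_fun \<alpha> T t x" if "x \<in> {0..}" for x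
      proof (rule tendsto_eventually)
        obtain N :: nat where "x \<le> real N" using real_arch_simple by blast
        then show "\<forall>\<^sub>F k in sequentially. fk k x = ME_fun \<alpha> T t x"
          using that unfolding fk_def eventually_sequentially
          by (intro exI[of _ N]) auto
      qed
    qed
    hence "(\<lambda>k. g 0 - g (real k)) \<longlonglongrightarrow> 1"
    proof -
      have "integral {0..} (fk k) = g 0 - g (real k)" for k using fk_int[of k] by (rule integral_unique)
      moreover have "integral {0..} (ME_fun \<alpha> T t) = 1" using f1 by (rule integral_unique)
      ultimately show ?thesis using dc by simp
    qed
    moreover have "(\<lambda>k. g 0 - g (real k)) \<longlonglongrightarrow> g 0 - 0"
      by (intro tendsto_intros filterlim_compose[OF glim filterlim_real_sequentially])
    ultimately show ?thesis using LIMSEQ_unique by fastforce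
  qed
  show "(ME_fun \<alpha> T t has_integral (1 - g z)) {0..z}" if "z \<ge> 0" for z
    using int[OF that] g0 by simp
qed



lemma Basis_vec_range: "(Basis :: (real^'m::finite) set) = range (\<lambda>k. axis k 1)"
  unfolding Basis_vec_def by auto

lemma sum_Basis_nth:
  fixes f :: "(real^'m::finite) \<Rightarrow> real"
  shows "(\<Sum>b\<in>Basis. f b *\<^sub>R b) $ k = f (axis k 1)"
proof -
  have "(\<Sum>b\<in>Basis. f b *\<^sub>R b) $ k = (\<Sum>b\<in>Basis. f b *\<^sub>R b) \<bullet> axis k 1"
    by (rule cart_eq_inner_axis)
  also have "\<dots> = f (axis k 1)" by (rule inner_sum_left_Basis) simp
  finally show ?thesis .
qed

lemma lborel_prod:
  fixes \<phi> :: "'m::finite \<Rightarrow> real \<Rightarrow> real"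
  assumes int: "\<And>k. integrable lborel (\<phi> k)"
  shows "integrable lborel (\<lambda>y::real^'m. \<Prod>k\<in>UNIV. \<phi> k (y $ k))"
    and "(\<integral>y. (\<Prod>k\<in>UNIV. \<phi> k (y $ k)) \<partial>(lborel :: (real^'m) measure)) = (\<Prod>k\<in>UNIV. integral\<^sup>L lborel (\<phi> k))"
proof -
  have psf: "product_sigma_finite (\<lambda>_::real^'m. lborel :: real measure)"
    by (simp add: product_sigma_finite_def sigma_finite_lborel)
  define ax where "ax k = (axis k 1 :: real^'m)" for k
  have inj: "inj ax" unfolding ax_def inj_def by (auto simp: axis_eq_axis)
  have B: "(Basis :: (real^'m) set) = range ax" unfolding ax_def by (rule Basis_vec_range)
  define \<phi>' where "\<phi>' b = \<phi> (inv_into UNIV ax b)" for b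
  define sf where "sf f = (\<Sum>b\<in>(Basis::(real^'m) set). f b *\<^sub>R b)" for f
  have prodeq: "(\<Prod>k\<in>UNIV. \<phi> k (sf f $ k)) = (\<Prod>b\<in>Basis. \<phi>' b (f b))" for f
  proof -
    have "(\<Prod>b\<in>Basis. \<phi>' b (f b)) = (\<Prod>k\<in>UNIV. \<phi>' (ax k) (f (ax k)))"
      unfolding B using prod.reindex[OF inj, of "\<lambda>b. \<phi>' b (f b)"] by (simp add: comp_def)
    also have "\<dots> = (\<Prod>k\<in>UNIV. \<phi> k (sf f $ k))"
      unfolding \<phi>'_def sf_def sum_Basis_nth ax_def[symmetric] inv_into_f_f[OF inj UNIV_I] ..
    finally show ?thesis by simp
  qed
  have sfm: "sf \<in> borel_measurable (\<Pi>\<^sub>M b\<in>Basis. lborel)"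
    unfolding sf_def by measurable
  have intb: "integrable lborel (\<phi>' b)" for b unfolding \<phi>'_def by (rule int)
  have L: "lborel = distr (\<Pi>\<^sub>M b\<in>Basis. lborel) borel sf" unfolding sf_def by (rule lborel_eq)
  have meas: "(\<lambda>y::real^'m. \<Prod>k\<in>UNIV. \<phi> k (y $ k)) \<in> borel_measurable borel"
    using int by measurable
  have I1: "integrable (\<Pi>\<^sub>M b\<in>Basis. lborel) (\<lambda>f. \<Prod>b\<in>Basis. \<phi>' b (f b))"
    by (rule product_sigma_finite.product_integrable_prod[OF psf]) (auto intro: intb)
  show "integrable lborel (\<lambda>y::real^'m. \<Prod>k\<in>UNIV. \<phi> k (y $ k))"
    unfolding L using I1 meas sfm by (subst integrable_distr_eq) (auto simp: prodeq)
  have "(\<integral>y. (\<Prod>k\<in>UNIV. \<phi> k (y $ k)) \<partial>(lborel :: (real^'m) measure))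
      = (\<integral>f. (\<Prod>b\<in>Basis. \<phi>' b (f b)) \<partial>(\<Pi>\<^sub>M b\<in>Basis. lborel))"
    unfolding L using meas sfm by (subst integral_distr) (auto simp: prodeq)
  also have "\<dots> = (\<Prod>b\<in>Basis. integral\<^sup>L lborel (\<phi>' b))"
    by (rule product_sigma_finite.product_integral_prod[OF psf]) (auto intro: intb)
  also have "\<dots> = (\<Prod>k\<in>UNIV. integral\<^sup>L lborel (\<phi> k))"
    unfolding B \<phi>'_def by (subst prod.reindex[OF inj]) (simp add: inv_into_f_f[OF inj UNIV_I])
  finally show "(\<integral>y. (\<Prod>k\<in>UNIV. \<phi> k (y $ k)) \<partial>(lborel :: (real^'m) measure)) = (\<Prod>k\<in>UNIV. integral\<^sup>L lborel (\<phi> k))" .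
qed



lemma hk_to_lborel:
  fixes f :: "real \<Rightarrow> real"
  assumes hk: "(f has_integral c) S" and nn: "\<And>x. x \<in> S \<Longrightarrow> 0 \<le> f x"
    and S: "S \<in> sets borel" and fm: "f \<in> borel_measurable borel"
  shows "integrable lborel (\<lambda>x. indicator S x * f x)"
    "integral\<^sup>L lborel (\<lambda>x. indicator S x * f x) = c"
proof -
  have ai: "set_integrable lebesgue S f"
    using nonnegative_absolutely_integrable_1[of f S] hk nn by blast
  have m: "(\<lambda>x. indicator S x * f x) \<in> borel_measurable lborel"
    using S fm by measurable
  from ai show "integrable lborel (\<lambda>x. indicator S x * f x)"
    unfolding set_integrable_def using integrable_completion[OF m] by simp
  have "(LINT x:S | lebesgue. f x) = integral S f" by (rule set_lebesgue_integral_eq_integral(2)[OF ai])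
  also have "\<dots> = c" using hk by (rule integral_unique)
  finally show "integral\<^sup>L lborel (\<lambda>x. indicator S x * f x) = c"
    unfolding set_lebesgue_integral_def using integral_completion[OF m] by simp
qed

lemma ME_fun_cont:
  assumes "ME_triple \<alpha> T t"
  shows "continuous_on UNIV (ME_fun \<alpha> T t)"
proof -
  obtain n where \<alpha>: "\<alpha> \<in> carrier_vec n" and T: "T \<in> carrier_mat n n" and t: "t \<in> carrier_vec n"
    using assms unfolding ME_triple_def by blast
  define E where "E y a b = mat_exp (y \<cdot>\<^sub>m T) $$ (a,b)" for y a b
  have f_eq: "ME_fun \<alpha> T t = (\<lambda>y. \<Sum>a<n. \<alpha> $ a * (\<Sum>b<n. E y a b * t $ b))"
    unfolding ME_fun_def E_def using dot_mv[OF mat_exp_carrier[OF T] \<alpha> t] by auto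
  have "isCont (\<lambda>y. E y a b) y" if "a < n" "b < n" for a b y
    unfolding E_def by (rule DERIV_isCont[OF mat_exp_deriv[OF T that]])
  hence "isCont (ME_fun \<alpha> T t) y" for y unfolding f_eq by (intro continuous_intros) auto
  thus ?thesis by (simp add: continuous_at_imp_continuous_on)
qed

lemma ME_lborel:
  assumes ME: "ME_density \<alpha> T t" and z: "z \<ge> 0"
  shows "integrable lborel (\<lambda>s. indicator {0..z} s * ME_fun \<alpha> T t s)"
    "integral\<^sup>L lborel (\<lambda>s. indicator {0..z} s * ME_fun \<alpha> T t s)
       = 1 - \<alpha> \<bullet> (mat_exp (z \<cdot>\<^sub>m T) *\<^sub>v ME_l T t)"
    "integrable lborel (\<lambda>s. indicator {0..} s * ME_fun \<alpha> T t s)"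
    "integral\<^sup>L lborel (\<lambda>s. indicator {0..} s * ME_fun \<alpha> T t s) = 1"
proof -
  have tr: "ME_triple \<alpha> T t" and nn: "\<And>x. x \<ge> 0 \<Longrightarrow> ME_fun \<alpha> T t x \<ge> 0"
    and f1: "(ME_fun \<alpha> T t has_integral 1) {0..}"
    using ME unfolding ME_density_def by auto
  have fm: "ME_fun \<alpha> T t \<in> borel_measurable borel"
    by (rule borel_measurable_continuous_onI[OF ME_fun_cont[OF tr]])
  note hz = ME_survival(3)[OF ME z]
  show "integrable lborel (\<lambda>s. indicator {0..z} s * ME_fun \<alpha> T t s)"
    "integral\<^sup>L lborel (\<lambda>s. indicator {0..z} s * ME_fun \<alpha> T t s)
       = 1 - \<alpha> \<bullet> (mat_exp (z \<cdot>\<^sub>m T) *\<^sub>v ME_l T t)"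
    using hk_to_lborel[OF hz _ _ fm] nn by auto
  show "integrable lborel (\<lambda>s. indicator {0..} s * ME_fun \<alpha> T t s)"
    "integral\<^sup>L lborel (\<lambda>s. indicator {0..} s * ME_fun \<alpha> T t s) = 1"
    using hk_to_lborel[OF f1 _ _ fm] nn by auto
qed

lemma idx_set_mem: "i \<in> idx_set L \<Longrightarrow> i k \<in> {1..L}"
  unfolding idx_set_def by (auto simp: PiE_def)

lemma idx_set_finite: "finite (idx_set L :: ('m::finite \<Rightarrow> nat) set)"
  unfolding idx_set_def by (intro finite_PiE) auto

lemma marginal_cdf:
  fixes M :: "'a measure" and L :: nat
    and \<alpha> :: "nat \<Rightarrow> real vec" and T :: "nat \<Rightarrow> real mat" and t :: "nat \<Rightarrow> real vec"
    and p :: "('m::finite \<Rightarrow> nat) \<Rightarrow> real"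
    and X :: "'a \<Rightarrow> real^'m" and j :: 'm and z :: real
  assumes ME: "\<forall>k\<in>{1..L}. ME_density (\<alpha> k) (T k) (t k)"
    and fnonneg: "\<forall>y\<in>orthant. MMEam_fun L \<alpha> T t p y \<ge> 0"
    and Xdist: "distributed M lborel X (\<lambda>y. ennreal (indicator orthant y * MMEam_fun L \<alpha> T t p y))"
    and z: "z \<ge> 0"
  shows "emeasure M {\<omega>\<in>space M. X \<omega> $ j \<le> z} =
    ennreal (\<Sum>i\<in>idx_set L. p i * (1 - \<alpha> (i j) \<bullet> (mat_exp (z \<cdot>\<^sub>m T (i j)) *\<^sub>v ME_l (T (i j)) (t (i j)))))"
    and "(\<Sum>i\<in>idx_set L. p i * (1 - \<alpha> (i j) \<bullet> (mat_exp (z \<cdot>\<^sub>m T (i j)) *\<^sub>v ME_l (T (i j)) (t (i j))))) \<ge> 0"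
proof -
  define S where "S = {y::real^'m. y $ j \<le> z}"
  have S: "S \<in> sets lborel" unfolding S_def by measurable
  define D where "D y = indicator orthant y * MMEam_fun L \<alpha> T t p y" for y :: "real^'m"
  define f where "f k = ME_fun (\<alpha> k) (T k) (t k)" for k
  define c where "c k = (indicator (if k = j then {0..z} else {0..}) :: real \<Rightarrow> real)" for k
  define \<psi> where "\<psi> i k s = c k s * f (i k) s" for i :: "'m \<Rightarrow> nat" and k s
  define H where "H y = (\<Sum>i\<in>idx_set L. p i * (\<Prod>k\<in>UNIV. \<psi> i k (y $ k)))" for y :: "real^'m"
  define G where "G k = \<alpha> k \<bullet> (mat_exp (z \<cdot>\<^sub>m T k) *\<^sub>v ME_l (T k) (t k))" for k
  have cprod: "(\<Prod>k\<in>UNIV. c k (y $ k)) = indicator orthant y * indicator S y" for y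
  proof (cases "(\<forall>k. 0 \<le> y $ k) \<and> y $ j \<le> z")
    case True
    then have "c k (y $ k) = 1" for k unfolding c_def by auto
    then show ?thesis using True by (simp add: orthant_def S_def indicator_def)
  next
    case False
    then obtain k where "c k (y $ k) = 0" unfolding c_def
      by (metis atLeastAtMost_iff atLeast_iff indicator_simps(2))
    then have p0: "(\<Prod>k\<in>UNIV. c k (y $ k)) = 0" by (intro prod_zero) auto
    have i0: "indicator orthant y * indicator S y = (0::real)"
      using False by (auto simp: orthant_def S_def indicator_def)
    show ?thesis unfolding p0 i0 ..
  qed
  have DH: "D y * indicator S y = H y" for y
  proof -
    have "H y = (\<Sum>i\<in>idx_set L. p i * ((\<Prod>k\<in>UNIV. c k (y $ k)) * (\<Prod>k\<in>UNIV. f (i k) (y $ k))))"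
      unfolding H_def \<psi>_def by (simp add: prod.distrib)
    also have "\<dots> = indicator orthant y * indicator S y * MMEam_fun L \<alpha> T t p y"
      unfolding cprod MMEam_fun_def f_def by (simp add: sum_distrib_left algebra_simps)
    finally show ?thesis unfolding D_def by simp
  qed
  have Hnn: "H y \<ge> 0" for y
    unfolding DH[symmetric] D_def using fnonneg by (auto simp: indicator_def)
  have \<psi>int: "integrable lborel (\<psi> i k) \<and> integral\<^sup>L lborel (\<psi> i k) = (if k = j then 1 - G (i k) else 1)"
    if i: "i \<in> idx_set L" for i k
  proof -
    have MEk: "ME_density (\<alpha> (i k)) (T (i k)) (t (i k))" using ME idx_set_mem[OF i] by blast
    show ?thesis unfolding \<psi>_def c_def f_def G_def
      using ME_lborel[OF MEk z] by (cases "k = j") auto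
  qed
  have Pint: "integrable lborel (\<lambda>y::real^'m. \<Prod>k\<in>UNIV. \<psi> i k (y $ k))"
    if "i \<in> idx_set L" for i using \<psi>int[OF that] by (intro lborel_prod(1)) auto
  have Hint: "integrable lborel H"
    unfolding H_def[abs_def] by (rule Bochner_Integration.integrable_sum, rule integrable_mult_right, rule Pint, assumption)
  have Hval: "integral\<^sup>L lborel H = (\<Sum>i\<in>idx_set L. p i * (1 - G (i j)))"
  proof -
    have "integral\<^sup>L lborel H = (\<Sum>i\<in>idx_set L. integral\<^sup>L lborel (\<lambda>y::real^'m. p i * (\<Prod>k\<in>UNIV. \<psi> i k (y $ k))))"
      unfolding H_def[abs_def] by (rule Bochner_Integration.integral_sum, rule integrable_mult_right, rule Pint, assumption)
    also have "\<dots> = (\<Sum>i\<in>idx_set L. p i * (\<Prod>k\<in>UNIV. integral\<^sup>L lborel (\<psi> i k)))"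
    proof (intro sum.cong refl)
      fix i :: "'m \<Rightarrow> nat" assume i: "i \<in> idx_set L"
      show "integral\<^sup>L lborel (\<lambda>y::real^'m. p i * (\<Prod>k\<in>UNIV. \<psi> i k (vec_nth y k))) = p i * (\<Prod>k\<in>UNIV. integral\<^sup>L lborel (\<psi> i k))"
        using lborel_prod(2)[of "\<psi> i"] \<psi>int[OF i] by simp
    qed
    also have "\<dots> = (\<Sum>i\<in>idx_set L. p i * (\<Prod>k\<in>UNIV. if k = j then 1 - G (i k) else 1))"
      using \<psi>int by (intro sum.cong refl) simp
    also have "\<dots> = (\<Sum>i\<in>idx_set L. p i * (1 - G (i j)))"
      by (simp add: prod.delta)
    finally show ?thesis .
  qed
  have "{\<omega>\<in>space M. X \<omega> $ j \<le> z} = X -` S \<inter> space M" unfolding S_def by auto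
  hence "emeasure M {\<omega>\<in>space M. X \<omega> $ j \<le> z} = (\<integral>\<^sup>+y. ennreal (D y) * indicator S y \<partial>lborel)"
    using distributed_emeasure[OF Xdist S] unfolding D_def by simp
  also have "\<dots> = (\<integral>\<^sup>+y. ennreal (H y) \<partial>lborel)"
    by (intro nn_integral_cong) (simp add: DH[symmetric] indicator_def)
  also have "\<dots> = ennreal (integral\<^sup>L lborel H)"
    using Hint Hnn by (intro nn_integral_eq_integral) auto
  finally show "emeasure M {\<omega>\<in>space M. X \<omega> $ j \<le> z} =
    ennreal (\<Sum>i\<in>idx_set L. p i * (1 - \<alpha> (i j) \<bullet> (mat_exp (z \<cdot>\<^sub>m T (i j)) *\<^sub>v ME_l (T (i j)) (t (i j)))))"
    unfolding Hval G_def .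
  have "integral\<^sup>L lborel H \<ge> 0" using Hnn by (intro integral_nonneg_AE) auto
  then show "(\<Sum>i\<in>idx_set L. p i * (1 - \<alpha> (i j) \<bullet> (mat_exp (z \<cdot>\<^sub>m T (i j)) *\<^sub>v ME_l (T (i j)) (t (i j))))) \<ge> 0"
    unfolding Hval G_def .
qed



lemma bounded_at_top_cont:
  fixes f :: "real \<Rightarrow> real"
  assumes c: "continuous_on UNIV f" and l: "(f \<longlongrightarrow> 0) at_top"
  shows "\<exists>C. \<forall>y\<ge>0. \<bar>f y\<bar> \<le> C"
proof -
  have "\<forall>\<^sub>F y in at_top. dist (f y) 0 < 1" using l by (rule tendstoD) simp
  then obtain Y where Y0: "\<And>y. y \<ge> Y \<Longrightarrow> dist (f y) 0 < 1" by (auto simp: eventually_at_top_linorder)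
  have Y: "\<bar>f y\<bar> < 1" if "y \<ge> Y" for y using Y0[OF that] by (simp add: dist_real_def)
  have "compact (f ` {0..Y})"
    by (rule compact_continuous_image[OF continuous_on_subset[OF c]]) auto
  hence "bounded (f ` {0..Y})" by (rule compact_imp_bounded)
  then obtain C' where C'0: "\<forall>v\<in>f ` {0..Y}. norm v \<le> C'" unfolding bounded_iff by blast
  have C': "norm v \<le> C'" if "v \<in> f ` {0..Y}" for v using C'0 that by blast
  show ?thesis
  proof (intro exI allI impI)
    fix y :: real assume "y \<ge> 0"
    show "\<bar>f y\<bar> \<le> max C' 1"
    proof (cases "y \<le> Y")
      case True then show ?thesis using C'[of "f y"] \<open>y \<ge> 0\<close> by auto
    next
      case False then show ?thesis using Y[of y] by auto
    qed
  qed
qed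

lemma smult_neg_neg: "(- r) \<cdot>\<^sub>m (- (x \<cdot>\<^sub>m (T :: real mat))) = (x * r) \<cdot>\<^sub>m T"
  by (intro eq_matI) auto

lemma G_laplace:
  fixes N :: "real measure"
  assumes ME: "ME_density \<alpha> T t" and x: "x \<ge> 0" and N: "prob_space N" and sN: "sets N = sets borel"
    and pos: "AE r in N. r > 0"
  shows "integrable N (\<lambda>r. \<alpha> \<bullet> (mat_exp ((x * r) \<cdot>\<^sub>m T) *\<^sub>v ME_l T t))"
    "\<alpha> \<bullet> (mat_laplace N (- (x \<cdot>\<^sub>m T)) *\<^sub>v ME_l T t) = (\<integral>r. \<alpha> \<bullet> (mat_exp ((x * r) \<cdot>\<^sub>m T) *\<^sub>v ME_l T t) \<partial>N)"
proof -
  interpret N: prob_space N by (rule N)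
  obtain n where \<alpha>: "\<alpha> \<in> carrier_vec n" and T: "T \<in> carrier_mat n n" and t: "t \<in> carrier_vec n"
    and ev: "\<forall>z::complex. eigenvalue (map_mat complex_of_real T) z \<longrightarrow> Re z < 0"
    using ME unfolding ME_density_def ME_triple_def by blast
  obtain Bi where Bi: "mat_inverse (- T) = Some Bi" "(- T) * Bi = 1\<^sub>m n" "Bi \<in> carrier_mat n n"
    using ME_inv[OF T ev] by blast
  define l where "l = ME_l T t"
  have l: "l \<in> carrier_vec n" unfolding l_def ME_l_def Bi using Bi t by simp
  define E where "E y a b = mat_exp (y \<cdot>\<^sub>m T) $$ (a,b)" for y a b
  have Econt: "continuous_on UNIV (\<lambda>y. E y a b)" if "a < n" "b < n" for a b
    unfolding E_def using mat_exp_deriv[OF T that]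
    by (meson DERIV_continuous continuous_at_imp_continuous_on)
  have Eint: "integrable N (\<lambda>r. E (x * r) a b)" if ab: "a < n" "b < n" for a b
  proof -
    obtain C where C: "\<And>y. y \<ge> 0 \<Longrightarrow> \<bar>E y a b\<bar> \<le> C"
      using bounded_at_top_cont[OF Econt[OF ab]] mat_exp_entry_lim[OF T ev ab] unfolding E_def by blast
    have cont: "continuous_on UNIV (\<lambda>r. E (x * r) a b)"
      using continuous_on_compose2[OF Econt[OF ab], of UNIV "\<lambda>r. x * r"]
      by (auto intro: continuous_intros)
    have m: "(\<lambda>r. E (x * r) a b) \<in> borel_measurable N"
      using borel_measurable_continuous_onI[OF cont] measurable_cong_sets[OF sN refl] by blast
    show ?thesis
    proof (rule N.integrable_const_bound[where B=C])
      show "AE r in N. norm (E (x * r) a b) \<le> C"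
        using pos by eventually_elim (use x C in auto)
    qed (rule m)
  qed
  have g_eq: "\<alpha> \<bullet> (mat_exp (y \<cdot>\<^sub>m T) *\<^sub>v l) = (\<Sum>a<n. \<alpha> $ a * (\<Sum>b<n. E y a b * l $ b))" for y
    unfolding E_def using dot_mv[OF mat_exp_carrier[OF T] \<alpha> l] .
  show int: "integrable N (\<lambda>r. \<alpha> \<bullet> (mat_exp ((x * r) \<cdot>\<^sub>m T) *\<^sub>v ME_l T t))"
    unfolding l_def[symmetric] g_eq by (intro Bochner_Integration.integrable_sum integrable_mult_right integrable_mult_left Eint) auto
  define Lap where "Lap = mat_laplace N (- (x \<cdot>\<^sub>m T))"
  have Lap: "Lap \<in> carrier_mat n n" unfolding Lap_def mat_laplace_def using T by auto
  have Lap_ent: "Lap $$ (a,b) = (\<integral>r. E (x * r) a b \<partial>N)" if "a < n" "b < n" for a b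
  proof -
    have "Lap $$ (a,b) = (\<integral>r. mat_exp ((- r) \<cdot>\<^sub>m (- (x \<cdot>\<^sub>m T))) $$ (a,b) \<partial>N)"
      unfolding Lap_def mat_laplace_def using that T by (subst index_mat) auto
    then show ?thesis unfolding smult_neg_neg E_def .
  qed
  have "\<alpha> \<bullet> (Lap *\<^sub>v l) = (\<Sum>a<n. \<alpha> $ a * (\<Sum>b<n. Lap $$ (a,b) * l $ b))"
    by (rule dot_mv[OF Lap \<alpha> l])
  also have "\<dots> = (\<Sum>a<n. \<alpha> $ a * (\<Sum>b<n. (\<integral>r. E (x * r) a b \<partial>N) * l $ b))"
    by (intro sum.cong refl) (simp add: Lap_ent)
  also have "\<dots> = (\<integral>r. (\<Sum>a<n. \<alpha> $ a * (\<Sum>b<n. E (x * r) a b * l $ b)) \<partial>N)"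
  proof -
    have I1: "integrable N (\<lambda>r. \<Sum>b<n. E (x * r) a b * l $ b)" if "a < n" for a
      using that by (intro Bochner_Integration.integrable_sum integrable_mult_left Eint) auto
    have I2: "(\<integral>r. (\<Sum>b<n. E (x * r) a b * l $ b) \<partial>N) = (\<Sum>b<n. (\<integral>r. E (x * r) a b \<partial>N) * l $ b)"
      if "a < n" for a
      using that by (subst Bochner_Integration.integral_sum)
        (auto intro!: integrable_mult_left Eint simp: integral_mult_left_zero)
    have "(\<integral>r. (\<Sum>a<n. \<alpha> $ a * (\<Sum>b<n. E (x * r) a b * l $ b)) \<partial>N)
        = (\<Sum>a<n. (\<integral>r. \<alpha> $ a * (\<Sum>b<n. E (x * r) a b * l $ b) \<partial>N))"
      by (rule Bochner_Integration.integral_sum) (auto intro!: integrable_mult_right I1)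
    also have "\<dots> = (\<Sum>a<n. \<alpha> $ a * (\<Sum>b<n. (\<integral>r. E (x * r) a b \<partial>N) * l $ b))"
      by (intro sum.cong refl) (simp add: integral_mult_right_zero I2)
    finally show ?thesis by (rule sym)
  qed
  also have "\<dots> = (\<integral>r. \<alpha> \<bullet> (mat_exp ((x * r) \<cdot>\<^sub>m T) *\<^sub>v l) \<partial>N)"
    unfolding g_eq ..
  finally show "\<alpha> \<bullet> (mat_laplace N (- (x \<cdot>\<^sub>m T)) *\<^sub>v ME_l T t) = (\<integral>r. \<alpha> \<bullet> (mat_exp ((x * r) \<cdot>\<^sub>m T) *\<^sub>v ME_l T t) \<partial>N)"
    unfolding Lap_def l_def .
qed



theorem theorem13:
  fixes M :: "'a measure"
    and L :: nat
    and \<alpha> :: "nat \<Rightarrow> real vec" and T :: "nat \<Rightarrow> real mat" and t :: "nat \<Rightarrow> real vec"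
    and p :: "('m::finite \<Rightarrow> nat) \<Rightarrow> real"
    and X :: "'a \<Rightarrow> real^'m" and B :: "'a \<Rightarrow> real"
    and j :: 'm and x :: real
  assumes "prob_space M"
    and "L \<ge> 1"
    and ME: "\<forall>k\<in>{1..L}. ME_density (\<alpha> k) (T k) (t k)"
    and psum: "(\<Sum>i\<in>idx_set L. p i) = 1"
    and fnonneg: "\<forall>y\<in>orthant. MMEam_fun L \<alpha> T t p y \<ge> 0"
    and Xdist: "distributed M lborel X
                  (\<lambda>y. ennreal (indicator orthant y * MMEam_fun L \<alpha> T t p y))"
    and Bpos: "\<forall>\<omega>\<in>space M. B \<omega> > 0"
    and Bmeas: "B \<in> borel_measurable M"
    and Xmeas: "X \<in> borel_measurable M"
    and indep: "prob_space.indep_set M {B -` A \<inter> space M | A. A \<in> sets (borel :: real measure)}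
                                    {X -` A \<inter> space M | A. A \<in> sets (borel :: (real^'m) measure)}"
    and "x \<ge> 0"
  shows "measure M {\<omega>\<in>space M. X \<omega> $ j / B \<omega> \<le> x} =
    1 - (\<Sum>i\<in>idx_set L. p i * (\<alpha> (i j) \<bullet>
           (mat_laplace (distr M borel B) (- (x \<cdot>\<^sub>m T (i j))) *\<^sub>v ME_l (T (i j)) (t (i j)))))"
proof -
  interpret P: prob_space M by fact
  note ME = ME
  define Xj where "Xj \<omega> = X \<omega> $ j" for \<omega>
  define \<mu>B where "\<mu>B = distr M borel B"
  define \<mu>X where "\<mu>X = distr M borel Xj"
  define G where "G k z = \<alpha> k \<bullet> (mat_exp (z \<cdot>\<^sub>m T k) *\<^sub>v ME_l (T k) (t k))" for k z
  define F where "F z = (\<Sum>i\<in>idx_set L. p i * (1 - G (i j) z))" for z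
  have pmj: "(\<lambda>y::real^'m. y $ j) \<in> borel_measurable borel" by measurable
  have Xjm: "Xj \<in> borel_measurable M" unfolding Xj_def by (rule measurable_compose[OF Xmeas pmj])
  have svc: "sigma_sets (space M) {Y -` A \<inter> space M | A. A \<in> sets (borel :: real measure)}
      = {Y -` A \<inter> space M | A. A \<in> sets (borel :: real measure)}" for Y :: "'a \<Rightarrow> real"
  proof -
    have "sigma_sets (UNIV :: real set) (sets borel) = sets borel"
      using sets.sigma_sets_eq[of "borel :: real measure"] by simp
    then show ?thesis using sigma_sets_vimage_commute[of Y "space M" UNIV "sets borel"] by auto
  qed
  have Xjsub: "{Xj -` A \<inter> space M | A. A \<in> sets (borel :: real measure)}
      \<subseteq> {X -` A \<inter> space M | A. A \<in> sets (borel :: (real^'m) measure)}"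
  proof
    fix S assume "S \<in> {Xj -` A \<inter> space M | A. A \<in> sets (borel :: real measure)}"
    then obtain A where A: "A \<in> sets (borel :: real measure)" and S: "S = Xj -` A \<inter> space M" by blast
    have pm: "(\<lambda>y::real^'m. y $ j) \<in> borel_measurable borel" by measurable
    have "(\<lambda>y::real^'m. y $ j) -` A \<inter> space borel \<in> sets borel" by (rule measurable_sets[OF pm A])
    moreover have "S = X -` ((\<lambda>y::real^'m. y $ j) -` A \<inter> space borel) \<inter> space M"
      unfolding S Xj_def by auto
    ultimately show "S \<in> {X -` A \<inter> space M | A. A \<in> sets (borel :: (real^'m) measure)}" by blast
  qed
  have ind: "P.indep_var borel B borel Xj"
  proof -
    have "P.indep_set {B -` A \<inter> space M | A. A \<in> sets (borel :: real measure)}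
        {Xj -` A \<inter> space M | A. A \<in> sets (borel :: real measure)}"
      using indep unfolding P.indep_set_def
      by (rule P.indep_sets_mono_sets) (use Xjsub in \<open>auto split: bool.split\<close>)
    then show ?thesis unfolding P.indep_var_eq svc using Bmeas Xjm by auto
  qed
  have prodeq: "\<mu>B \<Otimes>\<^sub>M \<mu>X = distr M (borel \<Otimes>\<^sub>M borel) (\<lambda>\<omega>. (B \<omega>, Xj \<omega>))"
    using ind unfolding P.indep_var_distribution_eq \<mu>B_def \<mu>X_def by simp
  have \<mu>Bp: "prob_space \<mu>B" unfolding \<mu>B_def by (rule P.prob_space_distr[OF Bmeas])
  have \<mu>Xp: "prob_space \<mu>X" unfolding \<mu>X_def by (rule P.prob_space_distr[OF Xjm])
  interpret \<mu>X: prob_space \<mu>X by (rule \<mu>Xp)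
  interpret \<mu>B: prob_space \<mu>B by (rule \<mu>Bp)
  have sB: "sets \<mu>B = sets borel" unfolding \<mu>B_def by simp
  have posB: "AE r in \<mu>B. r > 0"
    unfolding \<mu>B_def using Bpos by (subst AE_distr_iff[OF Bmeas]) (auto intro: AE_I2)
  define C where "C = {w :: real \<times> real. snd w / fst w \<le> x}"
  have Cm: "C \<in> sets (borel \<Otimes>\<^sub>M borel)"
  proof -
    have "{w \<in> space (borel \<Otimes>\<^sub>M borel). snd w / fst w \<le> x} \<in> sets (borel \<Otimes>\<^sub>M (borel :: real measure))"
      by measurable
    then show ?thesis unfolding C_def by (simp add: space_pair_measure)
  qed
  have pm: "(\<lambda>\<omega>. (B \<omega>, Xj \<omega>)) \<in> measurable M (borel \<Otimes>\<^sub>M borel)"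
    using Bmeas Xjm by measurable
  have MEij: "ME_density (\<alpha> (i j)) (T (i j)) (t (i j))" if "i \<in> idx_set L" for i
    using ME idx_set_mem[OF that] by blast
  have Gint: "integrable \<mu>B (\<lambda>r. G (i j) (x * r))" if "i \<in> idx_set L" for i
    unfolding G_def using G_laplace(1)[OF MEij[OF that] \<open>x \<ge> 0\<close> \<mu>Bp sB posB] .
  have Fint: "integrable \<mu>B (\<lambda>r. F (x * r))"
    unfolding F_def
    by (rule Bochner_Integration.integrable_sum, rule integrable_mult_right, rule Bochner_Integration.integrable_diff)
       (auto intro: Gint)
  have Fval: "(\<integral>r. F (x * r) \<partial>\<mu>B) = 1 - (\<Sum>i\<in>idx_set L. p i * (\<alpha> (i j) \<bullet>
           (mat_laplace (distr M borel B) (- (x \<cdot>\<^sub>m T (i j))) *\<^sub>v ME_l (T (i j)) (t (i j)))))"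
  proof -
    have "(\<integral>r. F (x * r) \<partial>\<mu>B) = (\<Sum>i\<in>idx_set L. (\<integral>r. p i * (1 - G (i j) (x * r)) \<partial>\<mu>B))"
      unfolding F_def
      by (rule Bochner_Integration.integral_sum, rule integrable_mult_right, rule Bochner_Integration.integrable_diff)
        (auto intro: Gint)
    also have "\<dots> = (\<Sum>i\<in>idx_set L. p i * (1 - (\<integral>r. G (i j) (x * r) \<partial>\<mu>B)))"
    proof (intro sum.cong refl)
      fix i :: "'m \<Rightarrow> nat" assume i: "i \<in> idx_set L"
      have "(\<integral>r. (1 - G (i j) (x * r)) \<partial>\<mu>B) = (\<integral>r. 1 \<partial>\<mu>B) - (\<integral>r. G (i j) (x * r) \<partial>\<mu>B)"
        by (rule Bochner_Integration.integral_diff) (auto intro: Gint[OF i])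
      then show "(\<integral>r. p i * (1 - G (i j) (x * r)) \<partial>\<mu>B) = p i * (1 - (\<integral>r. G (i j) (x * r) \<partial>\<mu>B))"
        by (simp add: integral_mult_right_zero \<mu>B.prob_space)
    qed
    also have "\<dots> = (\<Sum>i\<in>idx_set L. p i) - (\<Sum>i\<in>idx_set L. p i * (\<integral>r. G (i j) (x * r) \<partial>\<mu>B))"
      by (simp add: algebra_simps sum_subtractf)
    also have "\<dots> = 1 - (\<Sum>i\<in>idx_set L. p i * (\<alpha> (i j) \<bullet>
           (mat_laplace (distr M borel B) (- (x \<cdot>\<^sub>m T (i j))) *\<^sub>v ME_l (T (i j)) (t (i j)))))"
      unfolding psum G_def \<mu>B_def[symmetric]
      using G_laplace(2)[OF MEij \<open>x \<ge> 0\<close> \<mu>Bp sB posB] by simp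
    finally show ?thesis .
  qed
  have Fnn: "AE r in \<mu>B. F (x * r) \<ge> 0"
    using posB
  proof eventually_elim
    case (elim r)
    then have "x * r \<ge> 0" using \<open>x \<ge> 0\<close> by simp
    then show ?case
      unfolding F_def G_def using marginal_cdf(2)[OF ME fnonneg Xdist] by blast
  qed
  have "{\<omega>\<in>space M. X \<omega> $ j / B \<omega> \<le> x} = (\<lambda>\<omega>. (B \<omega>, Xj \<omega>)) -` C \<inter> space M"
    unfolding C_def Xj_def by auto
  hence "emeasure M {\<omega>\<in>space M. X \<omega> $ j / B \<omega> \<le> x} = emeasure (distr M (borel \<Otimes>\<^sub>M borel) (\<lambda>\<omega>. (B \<omega>, Xj \<omega>))) C"
    using emeasure_distr[OF pm Cm] by simp
  also have "\<dots> = emeasure (\<mu>B \<Otimes>\<^sub>M \<mu>X) C" unfolding prodeq ..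
  also have "\<dots> = (\<integral>\<^sup>+r. emeasure \<mu>X (Pair r -` C) \<partial>\<mu>B)"
    using Cm sB by (intro \<mu>X.emeasure_pair_measure_alt) (simp add: \<mu>X_def \<mu>B_def)
  also have "\<dots> = (\<integral>\<^sup>+r. ennreal (F (x * r)) \<partial>\<mu>B)"
  proof (rule nn_integral_cong_AE)
    show "AE r in \<mu>B. emeasure \<mu>X (Pair r -` C) = ennreal (F (x * r))"
      using posB
    proof eventually_elim
      case (elim r)
      have xr: "x * r \<ge> 0" using elim \<open>x \<ge> 0\<close> by simp
      have "Pair r -` C = {s. s \<le> x * r}"
        unfolding C_def using elim by (auto simp: divide_le_eq mult.commute)
      moreover have "{s::real. s \<le> x * r} \<in> sets borel" by measurable
      ultimately have "emeasure \<mu>X (Pair r -` C) = emeasure M (Xj -` {s. s \<le> x * r} \<inter> space M)"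
        unfolding \<mu>X_def by (simp add: emeasure_distr[OF Xjm])
      also have "Xj -` {s. s \<le> x * r} \<inter> space M = {\<omega>\<in>space M. X \<omega> $ j \<le> x * r}"
        unfolding Xj_def by auto
      also have "emeasure M \<dots> = ennreal (F (x * r))"
        unfolding F_def G_def by (rule marginal_cdf(1)[OF ME fnonneg Xdist xr])
      finally show ?case .
    qed
  qed
  also have "\<dots> = ennreal (\<integral>r. F (x * r) \<partial>\<mu>B)"
    by (rule nn_integral_eq_integral[OF Fint Fnn])
  finally have em: "emeasure M {\<omega>\<in>space M. X \<omega> $ j / B \<omega> \<le> x} = ennreal (\<integral>r. F (x * r) \<partial>\<mu>B)" .
  have "(\<integral>r. F (x * r) \<partial>\<mu>B) \<ge> 0" by (rule integral_nonneg_AE[OF Fnn])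
  then have "measure M {\<omega>\<in>space M. X \<omega> $ j / B \<omega> \<le> x} = (\<integral>r. F (x * r) \<partial>\<mu>B)"
    using em by (simp add: measure_def)
  then show ?thesis unfolding Fval .
qed


end
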